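(* Every finite $2$-group $G$ is mixable, and $\mathrm{mixlen}(G)=\log_2|G|$.
   Context: For a finite group $G$, a random subproduct is a random element $g_1^{\epsilon_1}\cdots g_k^{\epsilon_k}$ where $g_1,\dots,g_k\in G$ are fixed and $\epsilon_1,\dots,\epsilon_k$ are independent Bernoulli random variables with $\epsilon_i\sim\mathrm{Ber}(p_i)$, $p_i\in[0,1]$. $G$ is called mixable if some random subproduct is distributed exactly uniformly on $G$; the sequence $(g_1,p_1),\dots,(g_k,p_k)$ is then a mixing sequence of length $k$. The mixing length $\mathrm{mixlen}(G)$ is the minimal length of a mixing sequence of $G$. *)

theory Defs
  imports "HOL-Algebra.Group" Complex_Main
begin

text \<open>The random subproduct g_1^e_1 ... g_k^e_k for a fixed outcome es of the
  Bernoulli variables (True = exponent 1, False = exponent 0).\<close>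
definition subprod :: "('a, 'b) monoid_scheme \<Rightarrow> 'a list \<Rightarrow> bool list \<Rightarrow> 'a" where
  "subprod G gs es =
     foldr (\<lambda>x acc. x \<otimes>\<^bsub>G\<^esub> acc)
           (map2 (\<lambda>g e. if e then g else \<one>\<^bsub>G\<^esub>) gs es) \<one>\<^bsub>G\<^esub>"

definition outcome_prob :: "real list \<Rightarrow> bool list \<Rightarrow> real" where
  "outcome_prob ps es = (\<Prod>i<length es. if es ! i then ps ! i else 1 - ps ! i)"

definition subprod_prob :: "('a, 'b) monoid_scheme \<Rightarrow> 'a list \<Rightarrow> real list \<Rightarrow> 'a \<Rightarrow> real" where
  "subprod_prob G gs ps x =
     (\<Sum>es\<in>{es. length es = length gs}. if subprod G gs es = x then outcome_prob ps es else 0)"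

definition mixing_sequence :: "('a, 'b) monoid_scheme \<Rightarrow> 'a list \<Rightarrow> real list \<Rightarrow> bool" where
  "mixing_sequence G gs ps \<longleftrightarrow>
     length gs = length ps \<and> set gs \<subseteq> carrier G \<and> (\<forall>p\<in>set ps. 0 \<le> p \<and> p \<le> 1) \<and>
     (\<forall>x\<in>carrier G. subprod_prob G gs ps x = 1 / real (card (carrier G)))"

definition mixable :: "('a, 'b) monoid_scheme \<Rightarrow> bool" where
  "mixable G \<longleftrightarrow> (\<exists>gs ps. mixing_sequence G gs ps)"

definition mixlen :: "('a, 'b) monoid_scheme \<Rightarrow> nat" where
  "mixlen G = (LEAST k. \<exists>gs ps. mixing_sequence G gs ps \<and> length gs = k)"

end

theory Submission
  imports Defs "HOL-Algebra.Sylow"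
begin

lemma subprod_Nil [simp]: "subprod G [] es = \<one>\<^bsub>G\<^esub>"
  by (simp add: subprod_def)

lemma subprod_Cons [simp]:
  "subprod G (g # gs) (e # es) = (if e then g else \<one>\<^bsub>G\<^esub>) \<otimes>\<^bsub>G\<^esub> subprod G gs es"
  by (simp add: subprod_def)

lemma lists_Suc_eq:
  "{es::bool list. length es = Suc k} = (\<lambda>(e, es). e # es) ` (UNIV \<times> {es. length es = k})"
  by (auto simp: length_Suc_conv image_iff)

lemma card_bool_lists: "card {es::bool list. length es = k} = 2 ^ k"
  using card_lists_length_eq[of "UNIV::bool set" k] by simp

lemma finite_bool_lists: "finite {es::bool list. length es = k}"
  using finite_lists_length_eq[of "UNIV::bool set" k] by simp

lemma (in group) subprod_closed:
  assumes "subgroup H G" "set gs \<subseteq> H"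
  shows "subprod G gs es \<in> H"
  using assms(2)
proof (induction gs arbitrary: es)
  case Nil
  then show ?case using assms(1) by (simp add: subgroup.one_closed)
next
  case (Cons g gs)
  then show ?case using assms(1)
    by (cases es) (auto simp: subprod_def subgroup.one_closed subgroup.m_closed)
qed

lemma (in group) chain_exists:
  assumes "finite (carrier G)"
  shows "subgroup H G \<Longrightarrow> card H = 2 ^ k \<Longrightarrow>
    \<exists>gs. length gs = k \<and> set gs \<subseteq> H \<and> subprod G gs ` {es. length es = k} = H"
proof (induction k arbitrary: H)
  case 0
  have "\<one> \<in> H" using 0 by (simp add: subgroup.one_closed)
  moreover have "finite H" using finite_subset[OF subgroup.subset[OF 0(1)] assms] by simp
  ultimately have "H = {\<one>}" using 0 by (metis card_1_singletonE singletonD power_0)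
  then show ?case by (intro exI[of _ "[]"]) auto
next
  case (Suc k H)
  have finH: "finite H" using finite_subset[OF subgroup.subset[OF Suc(2)] assms] by simp
  interpret H: group "G\<lparr>carrier := H\<rparr>" using subgroup.subgroup_is_group[OF Suc(2) is_group] .
  have "order (G\<lparr>carrier := H\<rparr>) = 2 ^ k * 2" using Suc(3) by (simp add: order_def)
  then obtain Q where Q: "subgroup Q (G\<lparr>carrier := H\<rparr>)" "card Q = 2 ^ k"
    using sylow_thm[of 2 "G\<lparr>carrier := H\<rparr>" k 2] finH H.is_group by auto
  have QG: "subgroup Q G" using incl_subgroup[OF Suc(2) Q(1)] .
  have QH: "Q \<subseteq> H" using Q(1) subgroup.subset by fastforce
  obtain gs where gs: "length gs = k" "set gs \<subseteq> Q" "subprod G gs ` {es. length es = k} = Q"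
    using Suc(1)[OF QG Q(2)] by blast
  have finQ: "finite Q" using finite_subset[OF QH finH] .
  have "card Q < card H" using Q(2) Suc(3) by simp
  then have "\<not> H \<subseteq> Q" using card_mono[OF finQ, of H] by linarith
  then obtain g where g: "g \<in> H" "g \<notin> Q" by blast
  have gc: "g \<in> carrier G" using subgroup.mem_carrier[OF Suc(2) g(1)] .
  have Qc: "Q \<subseteq> carrier G" using subgroup.subset[OF QG] .
  define gQ where "gQ = (\<lambda>y. g \<otimes> y) ` Q"
  have inj: "inj_on (\<lambda>y. g \<otimes> y) Q" 
  proof (rule inj_onI)
    fix a b assume ab: "a \<in> Q" "b \<in> Q" "g \<otimes> a = g \<otimes> b"
    have ac: "a \<in> carrier G" using ab(1) Qc by blast
    have bc: "b \<in> carrier G" using ab(2) Qc by blast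
    show "a = b" using ab(3) gc ac bc by simp
  qed
  have cgQ: "card gQ = 2 ^ k" using card_image[OF inj] Q(2) gQ_def by simp
  have disj: "Q \<inter> gQ = {}"
  proof (rule ccontr)
    assume "Q \<inter> gQ \<noteq> {}"
    then obtain y where y: "y \<in> Q" "g \<otimes> y \<in> Q" unfolding gQ_def by auto
    have yc: "y \<in> carrier G" using y Qc by blast
    have "g = (g \<otimes> y) \<otimes> inv y" using yc gc by (simp add: m_assoc)
    also have "\<dots> \<in> Q" using subgroup.m_closed[OF QG y(2) subgroup.m_inv_closed[OF QG y(1)]] .
    finally show False using g by simp
  qed
  have gQH: "gQ \<subseteq> H" unfolding gQ_def using subgroup.m_closed[OF Suc(2) g(1)] QH by blast
  have "card (Q \<union> gQ) = card H"
    using card_Un_disjoint[OF finQ _ disj] finQ gQ_def cgQ Q(2) Suc(3) by simp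
  then have QgQ: "Q \<union> gQ = H" using card_subset_eq[OF finH] QH gQH by blast
  show ?case
  proof (intro exI[of _ "g # gs"] conjI)
    show "length (g # gs) = Suc k" using gs by simp
    show "set (g # gs) \<subseteq> H" using gs g QH by auto
    show "subprod G (g # gs) ` {es. length es = Suc k} = H"
    proof
      show "subprod G (g # gs) ` {es. length es = Suc k} \<subseteq> H"
      proof
        fix x assume "x \<in> subprod G (g # gs) ` {es. length es = Suc k}"
        then obtain e es where x: "x = subprod G (g # gs) (e # es)" "length es = k"
          by (auto simp: length_Suc_conv)
        have sQ: "subprod G gs es \<in> Q" using gs x by auto
        then have sH: "subprod G gs es \<in> H" using QH by blast
        then have sc: "subprod G gs es \<in> carrier G" using Qc sQ by blast
        show "x \<in> H"
        proof (cases e)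
          case True
          then show ?thesis using x(1) subgroup.m_closed[OF Suc(2) g(1) sH] by simp
        next
          case False
          then show ?thesis using x(1) sH sc by simp
        qed
      qed
    next
      show "H \<subseteq> subprod G (g # gs) ` {es. length es = Suc k}"
      proof
        fix x assume "x \<in> H"
        then have "x \<in> Q \<or> x \<in> gQ" using QgQ by blast
        then show "x \<in> subprod G (g # gs) ` {es. length es = Suc k}"
        proof
          assume "x \<in> Q"
          then obtain es where es: "length es = k" "x = subprod G gs es" using gs(3) by auto
          then have "x = subprod G (g # gs) (False # es)" using \<open>x \<in> Q\<close> Qc by auto
          then show ?thesis using es by (intro image_eqI[of _ _ "False # es"]) auto
        next
          assume "x \<in> gQ"
          then obtain y where y: "y \<in> Q" "x = g \<otimes> y" unfolding gQ_def by auto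
          then obtain es where es: "length es = k" "y = subprod G gs es" using gs(3) by auto
          then have "x = subprod G (g # gs) (True # es)" using y by auto
          then show ?thesis using es by (intro image_eqI[of _ _ "True # es"]) auto
        qed
      qed
    qed
  qed
qed

theorem mainTheorem1:
  fixes G :: "('a, 'b) monoid_scheme" and n :: nat
  assumes "group G" and "finite (carrier G)" and "card (carrier G) = 2 ^ n"
  shows "mixable G \<and> mixlen G = n"
proof -
  interpret group G by fact
  define L where "L = (\<lambda>k. {es::bool list. length es = k})"
  obtain gs where gs: "length gs = n" "set gs \<subseteq> carrier G"
      "subprod G gs ` L n = carrier G"
    using chain_exists[OF assms(2) subgroup_self assms(3)] unfolding L_def by blast
  define f where "f = subprod G gs"
  define ps where "ps = replicate n (1/2::real)"
  have injf: "inj_on f (L n)"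
    using gs(3) assms(3) card_bool_lists[of n] finite_bool_lists[of n]
    by (simp add: inj_on_iff_eq_card L_def f_def)
  have op: "outcome_prob ps es = (1/2) ^ n" if "es \<in> L n" for es
  proof -
    have "outcome_prob ps es = (\<Prod>i<n. (1/2::real))"
      unfolding outcome_prob_def using that by (intro prod.cong) (auto simp: ps_def L_def)
    then show ?thesis by simp
  qed
  have mix: "mixing_sequence G gs ps"
    unfolding mixing_sequence_def
  proof (intro conjI ballI)
    show "length gs = length ps" using gs by (simp add: ps_def)
    show "set gs \<subseteq> carrier G" by fact
    fix p assume "p \<in> set ps" then show "0 \<le> p" "p \<le> 1" by (auto simp: ps_def split: if_splits)
  next
    fix x assume x: "x \<in> carrier G"
    then obtain e0 where e0: "e0 \<in> L n" "f e0 = x" using gs(3) f_def by (metis imageE)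
    have fib: "{es \<in> L n. f es = x} = {e0}" using e0 injf by (auto simp: inj_on_def)
    have "subprod_prob G gs ps x = (\<Sum>es\<in>L n. if f es = x then (1/2::real) ^ n else 0)"
      unfolding subprod_prob_def L_def[symmetric] gs(1) f_def[symmetric]
      by (rule sum.cong) (auto simp: op L_def)
    also have "\<dots> = (\<Sum>es\<in>{es \<in> L n. f es = x}. (1/2::real) ^ n)"
      by (rule sum.inter_filter[symmetric]) (simp add: L_def finite_bool_lists)
    also have "\<dots> = (1/2) ^ n" by (simp add: fib)
    finally show "subprod_prob G gs ps x = 1 / real (card (carrier G))"
      using assms(3) by (simp add: power_one_over)
  qed
  have lower: "n \<le> k" if ms: "mixing_sequence G hs qs" and lk: "length hs = k" for hs qs k
  proof -
    have "carrier G \<subseteq> subprod G hs ` L k"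
    proof
      fix x assume x: "x \<in> carrier G"
      then have "subprod_prob G hs qs x \<noteq> 0" using ms assms(3) by (simp add: mixing_sequence_def)
      then obtain es where "es \<in> L k" "subprod G hs es = x"
        unfolding subprod_prob_def L_def lk
        by (smt (verit, best) mem_Collect_eq sum.neutral)
      then show "x \<in> subprod G hs ` L k" by auto
    qed
    then have "card (carrier G) \<le> card (subprod G hs ` L k)"
      by (intro card_mono) (auto simp: L_def finite_bool_lists)
    also have "\<dots> \<le> card (L k)" by (rule card_image_le) (simp add: L_def finite_bool_lists)
    finally have "(2::nat) ^ n \<le> 2 ^ k" using assms(3) by (simp add: L_def card_bool_lists)
    then show ?thesis by simp
  qed
  have "mixlen G = n"
    unfolding mixlen_def
  proof (rule Least_equality)
    show "\<exists>gs ps. mixing_sequence G gs ps \<and> length gs = n" using mix gs(1) by blast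
  next
    fix k assume "\<exists>gs ps. mixing_sequence G gs ps \<and> length gs = k"
    then show "n \<le> k" using lower by blast
  qed
  then show ?thesis using mix by (auto simp: mixable_def)
qed

end
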